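(* Let $G=(V,E)$ be a finite connected multigraph, $\mathscr H_0$ a connected component of its exchange graph, and $G_0$ the spanning subgraph of $G$ associated to $\mathscr H_0$. If $X$ and $X'$ are two different saturated components of $G_0$, then $X\cap X'=\emptyset$.
   Context: A spanning tree of $G$ is a subgraph with vertex set $V$ that is a tree; a spanning 2-forest is a subgraph with vertex set $V$, without cycles, with exactly two connected components; $\mathcal{ST}(G)$, $\mathcal{SF}_2(G)$ denote the sets of these. For a spanning subgraph $G'$, $G'+e$ (resp. $G'-e$) is the spanning subgraph with edge set $E(G')\cup\{e\}$ (resp. $E(G')\setminus\{e\}$). The exchange graph $\mathscr H$ of $G$ has vertex set $\mathscr V_1\sqcup\mathscr V_2$, $\mathscr V_1=\{(F,T): F\in\mathcal{SF}_2(G),T\in\mathcal{ST}(G),E(F)\cap E(T)=\emptyset\}$, $\mathscr V_2=\{(T,F):T\in\mathcal{ST}(G),F\in\mathcal{SF}_2(G),E(F)\cap E(T)=\emptyset\}$, with $(F,T)\in\mathscr V_1$ adjacent to $(T',F')\in\mathscr V_2$ iff there is $e\in E(T)$ with $F'=T-e$ and $T'=F+e$. For a connected component $\mathscr H_0$, the edge set $E(A)\cup E(B)$ is independent of the vertex $(A,B)$ of $\mathscr H_0$, and $G_0$ is the spanning subgraph with this edge set. For $X\subseteq V$, $G_0[X]$ is the induced subgraph on $X$. $X$ is saturated with respect to $G_0$ if $G_0[X]$ has exactly $2|X|-2$ edges; a saturated component of $G_0$ is a subset of $V$ that is saturated with respect to $G_0$ and maximal for inclusion among such subsets. *)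

theory Defs
  imports Main
begin

text \<open>Spanning subgraphs are identified with their edge sets F \<subseteq> E.\<close>

definition multigraph :: "'v set \<Rightarrow> 'e set \<Rightarrow> ('e \<Rightarrow> 'v set) \<Rightarrow> bool" where
  "multigraph V E ends \<longleftrightarrow> finite V \<and> finite E \<and>
     (\<forall>e\<in>E. ends e \<subseteq> V \<and> 1 \<le> card (ends e) \<and> card (ends e) \<le> 2)"

definition adj :: "('e \<Rightarrow> 'v set) \<Rightarrow> 'e set \<Rightarrow> ('v \<times> 'v) set" where
  "adj ends F = {(u, v). \<exists>e\<in>F. ends e = {u, v}}"

definition connected_on :: "'v set \<Rightarrow> ('e \<Rightarrow> 'v set) \<Rightarrow> 'e set \<Rightarrow> bool" where
  "connected_on V ends F \<longleftrightarrow> V \<noteq> {} \<and> (\<forall>u\<in>V. \<forall>v\<in>V. (u, v) \<in> (adj ends F)\<^sup>*)"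

definition components :: "'v set \<Rightarrow> ('e \<Rightarrow> 'v set) \<Rightarrow> 'e set \<Rightarrow> 'v set set" where
  "components V ends F = {{v\<in>V. (u, v) \<in> (adj ends F)\<^sup>*} | u. u \<in> V}"

text \<open>A cycle: a closed walk v0 e1 v1 ... ek vk = v0 (k \<ge> 1) with distinct edges
and distinct vertices v0..v(k-1) (loops and pairs of parallel edges are cycles).\<close>
definition has_cycle :: "('e \<Rightarrow> 'v set) \<Rightarrow> 'e set \<Rightarrow> bool" where
  "has_cycle ends F \<longleftrightarrow> (\<exists>vs es. length es \<ge> 1 \<and> length vs = length es + 1 \<and>
      distinct es \<and> set es \<subseteq> F \<and> hd vs = last vs \<and> distinct (tl vs) \<and>
      (\<forall>i<length es. ends (es ! i) = {vs ! i, vs ! Suc i}))"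

definition spanning_trees :: "'v set \<Rightarrow> 'e set \<Rightarrow> ('e \<Rightarrow> 'v set) \<Rightarrow> 'e set set" where
  "spanning_trees V E ends =
     {T. T \<subseteq> E \<and> \<not> has_cycle ends T \<and> connected_on V ends T}"

definition spanning_2forests :: "'v set \<Rightarrow> 'e set \<Rightarrow> ('e \<Rightarrow> 'v set) \<Rightarrow> 'e set set" where
  "spanning_2forests V E ends =
     {F. F \<subseteq> E \<and> \<not> has_cycle ends F \<and> card (components V ends F) = 2}"

text \<open>Vertices of the exchange graph: Inl (F,T) \<in> V1, Inr (T,F) \<in> V2.\<close>
definition exch_verts :: "'v set \<Rightarrow> 'e set \<Rightarrow> ('e \<Rightarrow> 'v set) \<Rightarrow>
    (('e set \<times> 'e set) + ('e set \<times> 'e set)) set" where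
  "exch_verts V E ends =
     {Inl (F, T) | F T. F \<in> spanning_2forests V E ends \<and> T \<in> spanning_trees V E ends \<and> F \<inter> T = {}}
   \<union> {Inr (T, F) | T F. T \<in> spanning_trees V E ends \<and> F \<in> spanning_2forests V E ends \<and> F \<inter> T = {}}"

definition exch_edge1 :: "'e set \<times> 'e set \<Rightarrow> 'e set \<times> 'e set \<Rightarrow> bool" where
  "exch_edge1 FT TF' \<longleftrightarrow> (\<exists>e\<in>snd FT. snd TF' = snd FT - {e} \<and> fst TF' = fst FT \<union> {e})"

definition exch_adj :: "'v set \<Rightarrow> 'e set \<Rightarrow> ('e \<Rightarrow> 'v set) \<Rightarrow>
    ((('e set \<times> 'e set) + ('e set \<times> 'e set)) \<times> (('e set \<times> 'e set) + ('e set \<times> 'e set))) set" where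
  "exch_adj V E ends =
     {(Inl p, Inr q) | p q. Inl p \<in> exch_verts V E ends \<and> Inr q \<in> exch_verts V E ends \<and> exch_edge1 p q}
   \<union> {(Inr q, Inl p) | p q. Inl p \<in> exch_verts V E ends \<and> Inr q \<in> exch_verts V E ends \<and> exch_edge1 p q}"

definition exch_component :: "'v set \<Rightarrow> 'e set \<Rightarrow> ('e \<Rightarrow> 'v set) \<Rightarrow>
    (('e set \<times> 'e set) + ('e set \<times> 'e set)) set \<Rightarrow> bool" where
  "exch_component V E ends H0 \<longleftrightarrow> (\<exists>p\<in>exch_verts V E ends.
      H0 = {q \<in> exch_verts V E ends. (p, q) \<in> (exch_adj V E ends)\<^sup>*})"

definition pair_edges :: "('e set \<times> 'e set) + ('e set \<times> 'e set) \<Rightarrow> 'e set" where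
  "pair_edges x = (case x of Inl (A, B) \<Rightarrow> A \<union> B | Inr (A, B) \<Rightarrow> A \<union> B)"

definition induced_edges :: "('e \<Rightarrow> 'v set) \<Rightarrow> 'e set \<Rightarrow> 'v set \<Rightarrow> 'e set" where
  "induced_edges ends E0 X = {e\<in>E0. ends e \<subseteq> X}"

definition saturated :: "'v set \<Rightarrow> ('e \<Rightarrow> 'v set) \<Rightarrow> 'e set \<Rightarrow> 'v set \<Rightarrow> bool" where
  "saturated V ends E0 X \<longleftrightarrow> X \<subseteq> V \<and>
     int (card (induced_edges ends E0 X)) = 2 * int (card X) - 2"

definition saturated_component :: "'v set \<Rightarrow> ('e \<Rightarrow> 'v set) \<Rightarrow> 'e set \<Rightarrow> 'v set \<Rightarrow> bool" where
  "saturated_component V ends E0 X \<longleftrightarrow> saturated V ends E0 X \<and>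
     (\<forall>Y. saturated V ends E0 Y \<and> X \<subseteq> Y \<longrightarrow> Y = X)"

end

theory Submission imports Defs begin

lemma adj_sym: "sym (adj ends F)"
proof (rule symI)
  fix x y assume "(x,y) \<in> adj ends F"
  then obtain e where "e \<in> F" "ends e = {x,y}" unfolding adj_def by blast
  then show "(y,x) \<in> adj ends F" unfolding adj_def by (auto simp: insert_commute)
qed

lemma rt_sym: "(u,v) \<in> (adj ends F)\<^sup>* \<Longrightarrow> (v,u) \<in> (adj ends F)\<^sup>*"
  by (metis adj_sym sym_rtrancl symD)

lemma has_cycle_mono: "has_cycle ends F \<Longrightarrow> F \<subseteq> G \<Longrightarrow> has_cycle ends G"
proof -
  assume h: "has_cycle ends F" "F \<subseteq> G"
  then obtain vs es where P: "length es \<ge> 1" "length vs = length es + 1"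
      "distinct es" "set es \<subseteq> F" "hd vs = last vs" "distinct (tl vs)"
      "\<forall>i<length es. ends (es ! i) = {vs ! i, vs ! Suc i}"
    unfolding has_cycle_def by blast
  have "set es \<subseteq> G" using P(4) h(2) by blast
  then show ?thesis unfolding has_cycle_def using P by blast
qed
lemma path_exists:
  assumes "(a,b) \<in> (adj ends F)\<^sup>*"
  shows "\<exists>vs es. length vs = length es + 1 \<and> hd vs = a \<and> last vs = b \<and> distinct vs \<and>
     set es \<subseteq> F \<and> (\<forall>i<length es. ends (es!i) = {vs!i, vs!Suc i})"
  using assms
proof (induction rule: rtrancl_induct)
  case base show ?case by (rule exI[of _ "[a]"], rule exI[of _ "[]"]) simp
next
  case (step y z)
  from step.IH obtain vs es where P: "length vs = length es + 1" "hd vs = a" "last vs = y" "distinct vs"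
     "set es \<subseteq> F" "\<forall>i<length es. ends (es!i) = {vs!i, vs!Suc i}" by blast
  from step.hyps(2) obtain f where f: "f\<in>F" "ends f = {y,z}" unfolding adj_def by blast
  have ne: "vs \<noteq> []" using P(1) by auto
  show ?case
  proof (cases "z \<in> set vs")
    case True
    then obtain k where k: "k < length vs" "vs!k = z" by (metis in_set_conv_nth)
    have t: "take (Suc k) vs = take k vs @ [vs!k]" using k by (simp add: take_Suc_conv_app_nth)
    show ?thesis
    proof (rule exI[of _ "take (Suc k) vs"], rule exI[of _ "take k es"], intro conjI)
      show "length (take (Suc k) vs) = length (take k es) + 1" using P(1) k by auto
      show "hd (take (Suc k) vs) = a" using P(2) ne by simp
      show "last (take (Suc k) vs) = z" using t k by simp
      show "distinct (take (Suc k) vs)" using P(4) by simp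
      show "set (take k es) \<subseteq> F" using P(5) by (meson order_trans set_take_subset)
      show "\<forall>i<length (take k es). ends (take k es ! i) = {take (Suc k) vs ! i, take (Suc k) vs ! Suc i}"
        using P(6) by auto
    qed
  next
    case False
    show ?thesis
    proof (rule exI[of _ "vs @ [z]"], rule exI[of _ "es @ [f]"], intro conjI)
      show "length (vs @ [z]) = length (es @ [f]) + 1" using P(1) by auto
      show "hd (vs @ [z]) = a" using P(2) ne by simp
      show "last (vs @ [z]) = z" by simp
      show "distinct (vs @ [z])" using P(4) False by simp
      show "set (es @ [f]) \<subseteq> F" using P(5) f by simp
      show "\<forall>i<length (es @ [f]). ends ((es @ [f]) ! i) = {(vs @ [z]) ! i, (vs @ [z]) ! Suc i}"
      proof (intro allI impI)
        fix i assume i: "i < length (es @ [f])"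
        show "ends ((es @ [f]) ! i) = {(vs @ [z]) ! i, (vs @ [z]) ! Suc i}"
        proof (cases "i < length es")
          case True then show ?thesis using P(1,6) by (simp add: nth_append)
        next
          case False
          then have "i = length es" using i by simp
          moreover have "vs ! length es = y" using P(1,3) ne by (simp add: last_conv_nth)
          ultimately show ?thesis using P(1) f by (simp add: nth_append)
        qed
      qed
    qed
  qed
qed

lemma cycle_from_path:
  assumes "(a,b) \<in> (adj ends F)\<^sup>*" "e \<notin> F" "ends e = {a,b}"
  shows "has_cycle ends (insert e F)"
proof -
  obtain vs es where P: "length vs = length es + 1" "hd vs = a" "last vs = b" "distinct vs"
     "set es \<subseteq> F" "\<forall>i<length es. ends (es!i) = {vs!i, vs!Suc i}"
    using path_exists[OF assms(1)] by blast
  have ne: "vs \<noteq> []" using P(1) by auto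
  have des: "distinct es"
  proof (subst distinct_conv_nth, intro allI impI)
    fix i j assume ij: "i < length es" "j < length es" "i \<noteq> j"
    show "es ! i \<noteq> es ! j"
    proof
      assume eq: "es ! i = es ! j"
      then have "{vs!i, vs!Suc i} = {vs!j, vs!Suc j}" using P(6) ij by metis
      then have "(vs!i = vs!j \<and> vs!Suc i = vs!Suc j) \<or> (vs!i = vs!Suc j \<and> vs!Suc i = vs!j)"
        by (auto simp: doubleton_eq_iff)
      then show False using ij P(1,4) by (auto simp: nth_eq_iff_index_eq)
    qed
  qed
  show ?thesis unfolding has_cycle_def
  proof (rule exI[of _ "vs @ [a]"], rule exI[of _ "es @ [e]"], intro conjI)
    show "1 \<le> length (es @ [e])" by simp
    show "length (vs @ [a]) = length (es @ [e]) + 1" using P(1) by simp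
    show "distinct (es @ [e])" using des P(5) assms(2) by auto
    show "set (es @ [e]) \<subseteq> insert e F" using P(5) by auto
    show "hd (vs @ [a]) = last (vs @ [a])" using P(2) ne by simp
    have "a \<notin> set (tl vs)" using P(2,4) ne by (cases vs) auto
    then show "distinct (tl (vs @ [a]))" using P(4) ne by (cases vs) auto
    show "\<forall>i<length (es @ [e]). ends ((es @ [e]) ! i) = {(vs @ [a]) ! i, (vs @ [a]) ! Suc i}"
    proof (intro allI impI)
      fix i assume i: "i < length (es @ [e])"
      show "ends ((es @ [e]) ! i) = {(vs @ [a]) ! i, (vs @ [a]) ! Suc i}"
      proof (cases "i < length es")
        case True then show ?thesis using P(1,6) by (simp add: nth_append)
      next
        case False
        then have "i = length es" using i by simp
        moreover have "vs ! length es = b" using P(1,3) ne by (simp add: last_conv_nth)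
        ultimately show ?thesis using P(1) assms(3) by (auto simp: nth_append)
      qed
    qed
  qed
qed

lemma components_img: "components X ends F = (\<lambda>u. {v\<in>X. (u,v) \<in> (adj ends F)\<^sup>*}) ` X"
  unfolding components_def by blast

lemma card_image_less: "finite A \<Longrightarrow> x \<in> A \<Longrightarrow> y \<in> A \<Longrightarrow> x \<noteq> y \<Longrightarrow> h x = h y \<Longrightarrow> card (h ` A) < card A"
  by (metis card_image_le inj_on_def inj_on_iff_eq_card le_neq_implies_less)

lemma cls_eq:
  assumes "(u,w) \<in> (adj ends F)\<^sup>*"
  shows "{v\<in>X. (u,v) \<in> (adj ends F)\<^sup>*} = {v\<in>X. (w,v) \<in> (adj ends F)\<^sup>*}"
  using assms rt_sym[OF assms] by (meson rtrancl_trans)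

lemma forest_bound:
  assumes "finite X" "finite F" "\<forall>e\<in>F. ends e \<subseteq> X \<and> (\<exists>a b. ends e = {a,b})" "\<not> has_cycle ends F"
  shows "card F + card (components X ends F) \<le> card X"
  using assms(2,3,4)
proof (induction F rule: finite_induct)
  case empty
  show ?case unfolding components_img by (simp add: card_image_le assms(1))
next
  case (insert e F)
  have ncF: "\<not> has_cycle ends F" using insert.prems(2) has_cycle_mono by blast
  have IH: "card F + card (components X ends F) \<le> card X" using insert.IH insert.prems(1) ncF by blast
  obtain a b where ab: "ends e = {a,b}" using insert.prems(1) by blast
  have abX: "a \<in> X" "b \<in> X" using insert.prems(1) ab by auto
  have nc: "(a,b) \<notin> (adj ends F)\<^sup>*" using cycle_from_path[of a b ends F e] insert.hyps(2) ab insert.prems(2) by blast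
  define c where "c u = {v\<in>X. (u,v) \<in> (adj ends F)\<^sup>*}" for u
  define c' where "c' u = {v\<in>X. (u,v) \<in> (adj ends (insert e F))\<^sup>*}" for u
  define h where "h C = c' (SOME u. u \<in> C)" for C
  have sub: "(adj ends F)\<^sup>* \<subseteq> (adj ends (insert e F))\<^sup>*"
    by (rule rtrancl_mono) (auto simp: adj_def)
  have hc: "h (c u) = c' u" if "u \<in> X" for u
  proof -
    have "u \<in> c u" using that unfolding c_def by simp
    then have "(SOME w. w \<in> c u) \<in> c u" by (rule someI)
    then have "(u, SOME w. w \<in> c u) \<in> (adj ends (insert e F))\<^sup>*" unfolding c_def using sub by blast
    then have "c' u = c' (SOME w. w \<in> c u)" unfolding c'_def by (rule cls_eq)
    then show ?thesis unfolding h_def by simp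
  qed
  have cF: "components X ends F = c ` X" unfolding components_img c_def by (rule refl)
  have cF': "components X ends (insert e F) = c' ` X" unfolding components_img c'_def by (rule refl)
  have img: "c' ` X = h ` (c ` X)"
    unfolding image_image by (rule image_cong[OF refl]) (simp add: hc)
  have "(a,b) \<in> adj ends (insert e F)" unfolding adj_def using ab by blast
  then have "c' a = c' b" unfolding c'_def by (rule cls_eq[OF r_into_rtrancl])
  then have hab: "h (c a) = h (c b)" using hc abX by simp
  have cab: "c a \<noteq> c b"
  proof
    assume "c a = c b"
    moreover have "b \<in> c b" using abX unfolding c_def by simp
    ultimately show False using nc unfolding c_def by blast
  qed
  have "card (h ` (c ` X)) < card (c ` X)"
    by (rule card_image_less[OF _ _ _ cab hab]) (use assms(1) abX in auto)
  then have "card (components X ends (insert e F)) < card (components X ends F)"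
    unfolding cF cF' img .
  then show ?case using IH insert.hyps by simp
qed

lemma forest_bound2:
  assumes "finite X" "X \<noteq> {}" "finite F" "\<forall>e\<in>F. ends e \<subseteq> X \<and> (\<exists>a b. ends e = {a,b})" "\<not> has_cycle ends F"
  shows "card F + 1 \<le> card X"
proof -
  have "components X ends F \<noteq> {}" unfolding components_img using assms(2) by simp
  moreover have "finite (components X ends F)" unfolding components_img using assms(1) by simp
  ultimately have "card (components X ends F) \<ge> 1"
    by (simp add: Suc_leI card_gt_0_iff)
  then show ?thesis using forest_bound[OF assms(1,3,4,5)] by linarith
qed

lemma two_ends: "1 \<le> card A \<Longrightarrow> card A \<le> 2 \<Longrightarrow> \<exists>a b. A = {a,b}"
proof -
  assume "1 \<le> card A" "card A \<le> 2"
  then have "card A = 1 \<or> card A = 2" by linarith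
  then show ?thesis
  proof
    assume "card A = 1" then obtain a where "A = {a}" by (rule card_1_singletonE)
    then show ?thesis by blast
  next
    assume "card A = 2" then show ?thesis unfolding card_2_iff by blast
  qed
qed

lemma induced_bound1:
  assumes "multigraph V E ends" "F \<subseteq> E" "\<not> has_cycle ends F" "Y \<subseteq> V" "Y \<noteq> {}"
  shows "card (induced_edges ends F Y) + 1 \<le> card Y"
proof (rule forest_bound2)
  show "finite Y" using assms(1,4) unfolding multigraph_def by (meson finite_subset)
  show "Y \<noteq> {}" by fact
  have "finite E" using assms(1) unfolding multigraph_def by simp
  then show "finite (induced_edges ends F Y)"
    by (rule finite_subset[rotated]) (use assms(2) in \<open>auto simp: induced_edges_def\<close>)
  show "\<forall>e\<in>induced_edges ends F Y. ends e \<subseteq> Y \<and> (\<exists>a b. ends e = {a, b})"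
  proof
    fix e assume e: "e \<in> induced_edges ends F Y"
    then have "e \<in> E" "ends e \<subseteq> Y" using assms(2) unfolding induced_edges_def by auto
    then show "ends e \<subseteq> Y \<and> (\<exists>a b. ends e = {a, b})"
      using assms(1) two_ends unfolding multigraph_def by blast
  qed
  show "\<not> has_cycle ends (induced_edges ends F Y)"
    using assms(3) has_cycle_mono[of ends _ F] unfolding induced_edges_def by blast
qed

lemma induced_bound2:
  assumes "multigraph V E ends" "F \<subseteq> E" "\<not> has_cycle ends F" "T \<subseteq> E" "\<not> has_cycle ends T"
    "Y \<subseteq> V" "Y \<noteq> {}"
  shows "card (induced_edges ends (F \<union> T) Y) + 2 \<le> 2 * card Y"
proof -
  have "induced_edges ends (F \<union> T) Y = induced_edges ends F Y \<union> induced_edges ends T Y"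
    unfolding induced_edges_def by auto
  then have "card (induced_edges ends (F \<union> T) Y) \<le> card (induced_edges ends F Y) + card (induced_edges ends T Y)"
    by (simp add: card_Un_le)
  then show ?thesis using induced_bound1[OF assms(1,2,3,6,7)] induced_bound1[OF assms(1,4,5,6,7)] by linarith
qed

theorem lemma2p7:
  fixes V :: "'v set" and E :: "'e set" and ends :: "'e \<Rightarrow> 'v set"
  assumes "multigraph V E ends"
    and "connected_on V ends E"
    and "exch_component V E ends H0"
    and "p \<in> H0"
    and "E0 = pair_edges p"
    and "saturated_component V ends E0 X"
    and "saturated_component V ends E0 X'"
    and "X \<noteq> X'"
  shows "X \<inter> X' = {}"
proof (rule ccontr)
  assume ne: "X \<inter> X' \<noteq> {}"
  have pv: "p \<in> exch_verts V E ends" using assms(3,4) unfolding exch_component_def by blast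
  have disj: "(\<exists>F T. p = Inl (F, T) \<and> F \<in> spanning_2forests V E ends \<and> T \<in> spanning_trees V E ends)
    \<or> (\<exists>F T. p = Inr (T, F) \<and> F \<in> spanning_2forests V E ends \<and> T \<in> spanning_trees V E ends)"
    using pv unfolding exch_verts_def by blast
  obtain F T where FT: "F \<subseteq> E" "\<not> has_cycle ends F" "T \<subseteq> E" "\<not> has_cycle ends T" "E0 = F \<union> T"
  proof -
    from disj show ?thesis
    proof
      assume "\<exists>F T. p = Inl (F, T) \<and> F \<in> spanning_2forests V E ends \<and> T \<in> spanning_trees V E ends"
      then obtain F T where l: "p = Inl (F, T)" "F \<in> spanning_2forests V E ends" "T \<in> spanning_trees V E ends"
        by blast
      have a: "F \<subseteq> E" "\<not> has_cycle ends F" using l(2) unfolding spanning_2forests_def by auto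
      have b: "T \<subseteq> E" "\<not> has_cycle ends T" using l(3) unfolding spanning_trees_def by auto
      have c: "E0 = F \<union> T" using assms(5) l(1) unfolding pair_edges_def by simp
      show ?thesis by (rule that[OF a b c])
    next
      assume "\<exists>F T. p = Inr (T, F) \<and> F \<in> spanning_2forests V E ends \<and> T \<in> spanning_trees V E ends"
      then obtain F T where l: "p = Inr (T, F)" "F \<in> spanning_2forests V E ends" "T \<in> spanning_trees V E ends"
        by blast
      have a: "F \<subseteq> E" "\<not> has_cycle ends F" using l(2) unfolding spanning_2forests_def by auto
      have b: "T \<subseteq> E" "\<not> has_cycle ends T" using l(3) unfolding spanning_trees_def by auto
      have c: "E0 = F \<union> T" using assms(5) l(1) unfolding pair_edges_def by (simp add: Un_commute)
      show ?thesis by (rule that[OF a b c])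
    qed
  qed
  have finV: "finite V" and finE: "finite E" using assms(1) unfolding multigraph_def by auto
  have bound: "card (induced_edges ends E0 Y) + 2 \<le> 2 * card Y" if "Y \<subseteq> V" "Y \<noteq> {}" for Y
    using induced_bound2[OF assms(1) FT(1-4) that] FT(5) by simp
  have finI: "finite (induced_edges ends E0 Y)" for Y
    by (rule finite_subset[OF _ finE]) (use FT in \<open>auto simp: induced_edges_def\<close>)
  have sX: "saturated V ends E0 X" and sX': "saturated V ends E0 X'"
    using assms(6,7) unfolding saturated_component_def by auto
  define I where "I = X \<inter> X'"
  define U where "U = X \<union> X'"
  have XV: "X \<subseteq> V" "X' \<subseteq> V" using sX sX' unfolding saturated_def by auto
  have UV: "U \<subseteq> V" using XV unfolding U_def by auto
  have finX: "finite X" "finite X'" using XV finV finite_subset by auto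
  have cU: "card U + card I = card X + card X'" unfolding U_def I_def using card_Un_Int finX by metis
  have eX: "int (card (induced_edges ends E0 X)) = 2 * int (card X) - 2" using sX unfolding saturated_def by auto
  have eX': "int (card (induced_edges ends E0 X')) = 2 * int (card X') - 2" using sX' unfolding saturated_def by auto
  have bI: "card (induced_edges ends E0 I) + 2 \<le> 2 * card I" using bound[of I] ne XV unfolding I_def by auto
  have bU: "card (induced_edges ends E0 U) + 2 \<le> 2 * card U" using bound[of U] ne UV unfolding U_def by auto
  have un: "induced_edges ends E0 X \<union> induced_edges ends E0 X' \<subseteq> induced_edges ends E0 U"
    unfolding induced_edges_def U_def by auto
  have int: "induced_edges ends E0 X \<inter> induced_edges ends E0 X' = induced_edges ends E0 I"
    unfolding induced_edges_def I_def by auto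
  have "card (induced_edges ends E0 X \<union> induced_edges ends E0 X') + card (induced_edges ends E0 I)
      = card (induced_edges ends E0 X) + card (induced_edges ends E0 X')"
    using card_Un_Int[OF finI finI] int by metis
  moreover have "card (induced_edges ends E0 X \<union> induced_edges ends E0 X') \<le> card (induced_edges ends E0 U)"
    using un finI by (meson card_mono)
  ultimately have "int (card (induced_edges ends E0 U)) = 2 * int (card U) - 2"
    using eX eX' bI bU cU by linarith
  then have sU: "saturated V ends E0 U" unfolding saturated_def using UV by auto
  have "U = X" using assms(6) sU unfolding saturated_component_def U_def by auto
  moreover have "U = X'" using assms(7) sU unfolding saturated_component_def U_def by auto
  ultimately show False using assms(8) by simp
qed

end
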